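(* Let $n\ge2$, $N\ge n$ and let $(\mathcal T_0,\mathfrak c)$ be an $(N{+}1)$-colored initial triangulation in $\mathbb R^n$. Then successive bisections of simplices in $\mathcal T_0$ according to the generation-based bisection rule produce the same simplices as successive applications of Maubach's bisection to the simplices of $\mathcal T_0$ tagged by the Maubach initialization.
   Context: An $(N{+}1)$-colored triangulation is a conforming triangulation $\mathcal T_0$ of a polyhedral domain in $\mathbb R^n$ (finite set of $n$-simplices with disjoint interiors, any two meeting in the empty set or a common subsimplex) with a map $\mathfrak c$ from its vertices to $\{0,\dots,N\}$, $N\ge n$, such that vertices of each simplex have distinct colors. Generation-based rule: each vertex $v$ has an integer generation $g(v)$, level $\ell(v)$ and type $t(v)\in\{1,\dots,N\}$ with $g(v)=N(\ell(v)-1)+t(v)$; initial vertices have $g(v)=-\mathfrak c(v)$. For an arising $n$-simplex $T=[v_0,\dots,v_n]$ sorted so that $g(v_0)>\dots>g(v_n)$: if $\ell(v_n)\ne\ell(v_{n-1})$, the bisection edge is $[v_{n-1},v_n]$ and the midpoint gets generation $g(v_{n-1})+N$; otherwise with $j=\min\{k:\ell(v_k)=\ell(v_n)\}$ the bisection edge is $[v_j,v_n]$ and the midpoint gets generation $g(v_n)+2N+1-t(v_j)$. The children replace one endpoint of the bisection edge by its midpoint. Maubach's bisection: a tagged simplex $[v_0,\dots,v_n]_\gamma$, $\gamma\in\{1,\dots,n\}$, is bisected at $v'=(v_0+v_\gamma)/2$ into $[v_0,\dots,v_{\gamma-1},v',v_{\gamma+1},\dots,v_n]_{\gamma'}$ and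 $[v_1,\dots,v_\gamma,v',v_{\gamma+1},\dots,v_n]_{\gamma'}$, with $\gamma'=\gamma-1$ if $\gamma\ge2$ and $\gamma'=n$ if $\gamma=1$. Maubach initialization: order the vertices of $T\in\mathcal T_0$ as $v_0,\dots,v_n$ with $\mathfrak c(v_0)<\dots<\mathfrak c(v_n)$ and tag $T=[v_n,v_0,\dots,v_{n-1}]_n$ if $\mathfrak c(v_n)=N$, and $T=[v_0,\dots,v_n]_n$ otherwise. *)

theory Defs
  imports "HOL-Analysis.Analysis"
begin

type_synonym 'n pt = "real ^ 'n"

definition is_simplex :: "'n::finite pt set \<Rightarrow> bool" where
  "is_simplex V \<longleftrightarrow> finite V \<and> card V = CARD('n) + 1 \<and> \<not> affine_dependent V"

definition conforming_triangulation :: "'n::finite pt set set \<Rightarrow> bool" where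
  "conforming_triangulation T0 \<longleftrightarrow>
     finite T0 \<and> (\<forall>V\<in>T0. is_simplex V) \<and>
     (\<forall>V\<in>T0. \<forall>W\<in>T0. V \<noteq> W \<longrightarrow>
        interior (convex hull V) \<inter> interior (convex hull W) = {} \<and>
        convex hull V \<inter> convex hull W = convex hull (V \<inter> W))"

definition colored_triangulation ::
  "nat \<Rightarrow> 'n::finite pt set set \<Rightarrow> ('n pt \<Rightarrow> nat) \<Rightarrow> bool" where
  "colored_triangulation N T0 c \<longleftrightarrow>
     conforming_triangulation T0 \<and> CARD('n) \<le> N \<and>
     (\<forall>V\<in>T0. (\<forall>v\<in>V. c v \<le> N) \<and> inj_on c V)"

text \<open>A simplex for the generation-based rule is a list of its vertices, each
  paired with its generation. g = N(l-1)+t with t in {1..N}.\<close>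

definition lvl :: "nat \<Rightarrow> int \<Rightarrow> int" where
  "lvl N g = (g - 1) div int N + 1"

definition vtype :: "nat \<Rightarrow> int \<Rightarrow> int" where
  "vtype N g = (g - 1) mod int N + 1"

definition gsort :: "('n pt \<times> int) list \<Rightarrow> ('n pt \<times> int) list" where
  "gsort S = rev (sort_key snd S)"

definition gen_children ::
  "nat \<Rightarrow> ('n::finite pt \<times> int) list \<Rightarrow> ('n pt \<times> int) list set" where
  "gen_children N S =
     (let ws = gsort S; m = length ws - 1;
          g = (\<lambda>k. snd (ws ! k)); x = (\<lambda>k. fst (ws ! k))
      in if lvl N (g m) \<noteq> lvl N (g (m - 1)) then
           (let v' = (midpoint (x (m - 1)) (x m), g (m - 1) + int N)
            in {ws[m - 1 := v'], ws[m := v']})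
         else
           (let j = (LEAST k. lvl N (g k) = lvl N (g m));
                v' = (midpoint (x j) (x m), g m + 2 * int N + 1 - vtype N (g j))
            in {ws[j := v'], ws[m := v']}))"

inductive_set gen_desc ::
  "nat \<Rightarrow> ('n::finite pt \<times> int) list \<Rightarrow> ('n pt \<times> int) list set"
  for N S where
  gen_root: "S \<in> gen_desc N S"
| gen_step: "S' \<in> gen_desc N S \<Longrightarrow> S'' \<in> gen_children N S' \<Longrightarrow> S'' \<in> gen_desc N S"

text \<open>Tagged simplex [v_0,...,v_n]_gamma; n = CARD('n).\<close>
definition maub_children ::
  "('n::finite pt list \<times> nat) \<Rightarrow> ('n pt list \<times> nat) set" where
  "maub_children T =
     (let vs = fst T; \<gamma> = snd T; v' = midpoint (vs ! 0) (vs ! \<gamma>);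
          \<gamma>' = (if 2 \<le> \<gamma> then \<gamma> - 1 else CARD('n))
      in {(vs[\<gamma> := v'], \<gamma>'),
          (take \<gamma> (drop 1 vs) @ [v'] @ drop (\<gamma> + 1) vs, \<gamma>')})"

inductive_set maub_desc ::
  "('n::finite pt list \<times> nat) \<Rightarrow> ('n pt list \<times> nat) set"
  for T where
  maub_root: "T \<in> maub_desc T"
| maub_step: "T' \<in> maub_desc T \<Longrightarrow> T'' \<in> maub_children T' \<Longrightarrow> T'' \<in> maub_desc T"

text \<open>Maubach initialization: vs lists the vertices with increasing colours.\<close>
definition maub_init :: "nat \<Rightarrow> ('n::finite pt \<Rightarrow> nat) \<Rightarrow> 'n pt list \<Rightarrow> 'n pt list \<times> nat" where
  "maub_init N c vs =
     (if c (last vs) = N then (last vs # butlast vs, CARD('n)) else (vs, CARD('n)))"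

definition gen_init :: "('n::finite pt \<Rightarrow> nat) \<Rightarrow> 'n pt list \<Rightarrow> ('n pt \<times> int) list" where
  "gen_init c vs = map (\<lambda>v. (v, - int (c v))) vs"

end

theory Submission
  imports Defs
begin


lemma lvl_bounds:
  assumes "N > 0"
  shows "int N * lvl N g - int N < g \<and> g \<le> int N * lvl N g"
proof -
  have e: "g - 1 = int N * ((g - 1) div int N) + (g - 1) mod int N"
    by (simp add: mult_div_mod_eq)
  have "0 \<le> (g - 1) mod int N" "(g - 1) mod int N < int N" using assms by simp_all
  with e have "int N * ((g - 1) div int N) \<le> g - 1" "g - 1 < int N * ((g - 1) div int N) + int N"
    by linarith+
  thus ?thesis unfolding lvl_def by (simp add: distrib_left)
qed

lemma lvl_unique:
  assumes "N > 0" "int N * L - int N < g" "g \<le> int N * L"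
  shows "lvl N g = L"
proof -
  define l where "l = lvl N g"
  have b: "int N * l - int N < g" "g \<le> int N * l" using lvl_bounds[OF assms(1)] l_def by auto
  have "int N * (l - L) < int N * 1" using b assms by (simp add: right_diff_distrib)
  hence 1: "l - L < 1" using assms(1) by (simp only: mult_less_cancel_left)
  have "int N * (L - l) < int N * 1" using b assms by (simp add: right_diff_distrib)
  hence 2: "L - l < 1" using assms(1) by (simp only: mult_less_cancel_left)
  from 1 2 show ?thesis unfolding l_def by simp
qed


lemma lvl_lt:
  assumes "N > 0" "lvl N a < lvl N b" shows "a < b"
proof -
  have "int N * lvl N a \<le> int N * (lvl N b - 1)" using assms by (simp add: mult_left_mono)
  hence "int N * lvl N a \<le> int N * lvl N b - int N" by (simp add: right_diff_distrib)
  thus ?thesis using lvl_bounds[OF assms(1), of a] lvl_bounds[OF assms(1), of b]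
    by linarith
qed

lemma lvl_mono: "N > 0 \<Longrightarrow> a \<le> b \<Longrightarrow> lvl N a \<le> lvl N b"
  using lvl_lt not_less by blast

lemma lvl_plus: assumes "N > 0" shows "lvl N (g + int N) = lvl N g + 1"
proof (rule lvl_unique[OF assms])
  note b = lvl_bounds[OF assms, of g]
  show "int N * (lvl N g + 1) - int N < g + int N" using b by (simp add: distrib_left)
  show "g + int N \<le> int N * (lvl N g + 1)" using b by (simp add: distrib_left)
qed

lemma vtype_eq: "N > 0 \<Longrightarrow> vtype N g = g - int N * (lvl N g - 1)"
proof -
  have "(g - 1) mod int N = (g - 1) - int N * ((g - 1) div int N)"
    by (simp add: minus_div_mult_eq_mod[symmetric] mult.commute)
  thus ?thesis unfolding vtype_def lvl_def by simp
qed



definition cb :: "nat \<Rightarrow> 'a \<Rightarrow> 'a list \<Rightarrow> 'a list" where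
  "cb g x xs = take g (drop 1 xs) @ [x] @ drop (g + 1) xs"

lemma length_cb: "g < length xs \<Longrightarrow> length (cb g x xs) = length xs"
  unfolding cb_def by simp

lemma nth_cb: "g < length xs \<Longrightarrow> i < length xs \<Longrightarrow>
   cb g x xs ! i = (if i < g then xs ! Suc i else if i = g then x else xs ! i)"
  unfolding cb_def by (auto simp: nth_append min_def)

lemma zip_cb: "length xs = length ys \<Longrightarrow> zip (cb g x xs) (cb g y ys) = cb g (x, y) (zip xs ys)"
  unfolding cb_def by (simp add: zip_append take_zip drop_zip)

lemma mset_cb: assumes "g < length xs" shows "mset (cb g x xs) = add_mset x (mset xs - {#xs ! 0#})"
proof -
  obtain y ys where xs: "xs = y # ys" using assms by (cases xs) auto
  have "mset ys = mset (take g ys) + mset (drop g ys)"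
    by (metis append_take_drop_id mset_append)
  thus ?thesis unfolding cb_def xs by simp
qed

definition ginv :: "nat \<Rightarrow> nat \<Rightarrow> int list \<Rightarrow> nat \<Rightarrow> bool" where
  "ginv N n G \<gamma> \<longleftrightarrow> length G = Suc n \<and> 1 \<le> \<gamma> \<and> \<gamma> \<le> n \<and>
    (\<forall>i. 1 \<le> i \<longrightarrow> i \<le> \<gamma> \<longrightarrow> lvl N (G!i) = lvl N (G!\<gamma>)) \<and>
    (\<forall>i. \<gamma> < i \<longrightarrow> i \<le> n \<longrightarrow> lvl N (G!i) = lvl N (G!\<gamma>) + 1) \<and>
    (\<forall>i j. \<gamma> < i \<longrightarrow> i < j \<longrightarrow> j \<le> n \<longrightarrow> G!j < G!i) \<and>
    (\<forall>i j. 1 \<le> i \<longrightarrow> i < j \<longrightarrow> j \<le> \<gamma> \<longrightarrow> G!j < G!i) \<and>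
    ((lvl N (G!0) < lvl N (G!\<gamma>) \<and> (\<gamma> < n \<longrightarrow> G!(Suc \<gamma>) < G!\<gamma> + int N)) \<or>
     (lvl N (G!0) = lvl N (G!\<gamma>) \<and> G!1 < G!0 \<and>
       (\<gamma> < n \<longrightarrow> G!(Suc \<gamma>) < G!\<gamma> - G!0 + int N * lvl N (G!\<gamma>) + int N + 1)))"

lemma ginvI_A:
  assumes "length G = Suc n" "1 \<le> \<gamma>" "\<gamma> \<le> n"
    "\<And>i. 1 \<le> i \<Longrightarrow> i \<le> \<gamma> \<Longrightarrow> lvl N (G!i) = lvl N (G!\<gamma>)"
    "\<And>i. \<gamma> < i \<Longrightarrow> i \<le> n \<Longrightarrow> lvl N (G!i) = lvl N (G!\<gamma>) + 1"
    "\<And>i j. \<gamma> < i \<Longrightarrow> i < j \<Longrightarrow> j \<le> n \<Longrightarrow> G!j < G!i"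
    "\<And>i j. 1 \<le> i \<Longrightarrow> i < j \<Longrightarrow> j \<le> \<gamma> \<Longrightarrow> G!j < G!i"
    "lvl N (G!0) < lvl N (G!\<gamma>)" "\<gamma> < n \<Longrightarrow> G!(Suc \<gamma>) < G!\<gamma> + int N"
  shows "ginv N n G \<gamma>"
  unfolding ginv_def using assms by blast

lemma ginvI_B:
  assumes "length G = Suc n" "1 \<le> \<gamma>" "\<gamma> \<le> n"
    "\<And>i. 1 \<le> i \<Longrightarrow> i \<le> \<gamma> \<Longrightarrow> lvl N (G!i) = lvl N (G!\<gamma>)"
    "\<And>i. \<gamma> < i \<Longrightarrow> i \<le> n \<Longrightarrow> lvl N (G!i) = lvl N (G!\<gamma>) + 1"
    "\<And>i j. \<gamma> < i \<Longrightarrow> i < j \<Longrightarrow> j \<le> n \<Longrightarrow> G!j < G!i"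
    "\<And>i j. 1 \<le> i \<Longrightarrow> i < j \<Longrightarrow> j \<le> \<gamma> \<Longrightarrow> G!j < G!i"
    "lvl N (G!0) = lvl N (G!\<gamma>)" "G!1 < G!0"
    "\<gamma> < n \<Longrightarrow> G!(Suc \<gamma>) < G!\<gamma> - G!0 + int N * lvl N (G!\<gamma>) + int N + 1"
  shows "ginv N n G \<gamma>"
  unfolding ginv_def using assms by blast


context
  fixes N n :: nat and G :: "int list" and \<gamma> :: nat
  assumes N0: "N > 0" and inv: "ginv N n G \<gamma>"
begin

lemma len: "length G = Suc n"
  using inv unfolding ginv_def by blast
lemma g1: "1 \<le> \<gamma>"
  using inv unfolding ginv_def by blast
lemma gn: "\<gamma> \<le> n"
  using inv unfolding ginv_def by blast

lemma lo: "1 \<le> i \<Longrightarrow> i \<le> \<gamma> \<Longrightarrow> lvl N (G!i) = lvl N (G!\<gamma>)"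
  using inv unfolding ginv_def by blast
lemma up: "\<gamma> < i \<Longrightarrow> i \<le> n \<Longrightarrow> lvl N (G!i) = lvl N (G!\<gamma>) + 1"
  using inv unfolding ginv_def by blast
lemma decU: "\<gamma> < i \<Longrightarrow> i < j \<Longrightarrow> j \<le> n \<Longrightarrow> G!j < G!i"
  using inv unfolding ginv_def by blast
lemma decL: "1 \<le> i \<Longrightarrow> i < j \<Longrightarrow> j \<le> \<gamma> \<Longrightarrow> G!j < G!i"
  using inv unfolding ginv_def by blast
lemma decU': "\<gamma> < i \<Longrightarrow> i \<le> j \<Longrightarrow> j \<le> n \<Longrightarrow> G!j \<le> G!i"
  using decU[of i j] by (cases "i = j") auto
lemma decL': "1 \<le> i \<Longrightarrow> i \<le> j \<Longrightarrow> j \<le> \<gamma> \<Longrightarrow> G!j \<le> G!i"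
  using decL[of i j] by (cases "i = j") auto
lemma cases_AB:
  "(lvl N (G!0) < lvl N (G!\<gamma>) \<and> (\<gamma> < n \<longrightarrow> G!(Suc \<gamma>) < G!\<gamma> + int N)) \<or>
     (lvl N (G!0) = lvl N (G!\<gamma>) \<and> G!1 < G!0 \<and>
       (\<gamma> < n \<longrightarrow> G!(Suc \<gamma>) < G!\<gamma> - G!0 + int N * lvl N (G!\<gamma>) + int N + 1))"
  using inv unfolding ginv_def by blast

lemma bnd: "int N * lvl N g - int N < g" "g \<le> int N * lvl N g"
  using lvl_bounds[OF N0] by auto

lemma lo_bnd: "1 \<le> i \<Longrightarrow> i \<le> \<gamma> \<Longrightarrow> int N * lvl N (G!\<gamma>) - int N < G!i \<and> G!i \<le> int N * lvl N (G!\<gamma>)"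
proof -
  assume "1 \<le> i" "i \<le> \<gamma>"
  hence "lvl N (G!i) = lvl N (G!\<gamma>)" by (rule lo)
  hence "int N * lvl N (G!i) = int N * lvl N (G!\<gamma>)" by (rule arg_cong)
  thus ?thesis using bnd[of "G!i"] by linarith
qed
lemma up_bnd: "\<gamma> < i \<Longrightarrow> i \<le> n \<Longrightarrow> int N * lvl N (G!\<gamma>) < G!i \<and> G!i \<le> int N * lvl N (G!\<gamma>) + int N"
proof -
  assume "\<gamma> < i" "i \<le> n"
  hence "lvl N (G!i) = lvl N (G!\<gamma>) + 1" by (rule up)
  hence "int N * lvl N (G!i) = int N * (lvl N (G!\<gamma>) + 1)" by (rule arg_cong)
  hence "int N * lvl N (G!i) = int N * lvl N (G!\<gamma>) + int N" by (simp only: distrib_left mult_1_right)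
  thus ?thesis using bnd[of "G!i"] by linarith
qed


lemma Wall:
  assumes A: "\<gamma> < n \<longrightarrow> G!(Suc \<gamma>) < G!\<gamma> + int N"
    and j: "\<gamma> < j" "j \<le> n"
  shows "G!j < G!\<gamma> + int N"
proof -
  have "G!j \<le> G!(Suc \<gamma>)" using decU'[of "Suc \<gamma>" j] j by simp
  thus ?thesis using A j by linarith
qed

lemma A_childA:
  assumes A: "lvl N (G!0) < lvl N (G!\<gamma>)" "\<gamma> < n \<longrightarrow> G!(Suc \<gamma>) < G!\<gamma> + int N"
  shows "ginv N n (G[\<gamma> := G!\<gamma> + int N]) (if 2 \<le> \<gamma> then \<gamma> - 1 else n)"
proof -
  define G' where "G' = G[\<gamma> := G!\<gamma> + int N]"
  have lenG: "\<gamma> < length G" using len gn by simp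
  have nth': "G'!i = (if i = \<gamma> then G!\<gamma> + int N else G!i)" for i
    unfolding G'_def using lenG by simp
  have lp: "lvl N (G!\<gamma> + int N) = lvl N (G!\<gamma>) + 1" using lvl_plus[OF N0] .
  show ?thesis
  proof (cases "2 \<le> \<gamma>")
    case True
    have ne: "\<gamma> - 1 \<noteq> \<gamma>" "1 \<le> \<gamma> - 1" "\<gamma> - 1 \<le> \<gamma>" using True by auto
    have L': "lvl N (G'!(\<gamma>-1)) = lvl N (G!\<gamma>)" using nth'[of "\<gamma>-1"] lo[OF ne(2,3)] ne(1) by simp
    have "ginv N n G' (\<gamma> - 1)"
    proof (rule ginvI_A)
      show "length G' = Suc n" unfolding G'_def using len by simp
      show "1 \<le> \<gamma> - 1" "\<gamma> - 1 \<le> n" using True gn by auto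
      show "lvl N (G'!i) = lvl N (G'!(\<gamma>-1))" if "1 \<le> i" "i \<le> \<gamma> - 1" for i
      proof -
        have "i \<noteq> \<gamma>" "i \<le> \<gamma>" using that by auto
        thus ?thesis using that L' nth'[of i] lo[of i] by simp
      qed
      show "lvl N (G'!i) = lvl N (G'!(\<gamma>-1)) + 1" if "\<gamma> - 1 < i" "i \<le> n" for i
        using that L' nth'[of i] up[of i] lp by (cases "i = \<gamma>") auto
      show "G'!j < G'!i" if "\<gamma> - 1 < i" "i < j" "j \<le> n" for i j
      proof (cases "i = \<gamma>")
        case True
        then show ?thesis using that nth'[of i] nth'[of j] Wall[OF A(2), of j] by simp
      next
        case False
        hence "\<gamma> < i" "j \<noteq> \<gamma>" using that by auto
        then show ?thesis using that nth'[of i] nth'[of j] decU[of i j] False by simp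
      qed
      show "G'!j < G'!i" if "1 \<le> i" "i < j" "j \<le> \<gamma> - 1" for i j
      proof -
        have "i \<noteq> \<gamma>" "j \<noteq> \<gamma>" "j \<le> \<gamma>" using that by auto
        thus ?thesis using that nth'[of i] nth'[of j] decL[of i j] by simp
      qed
      show "lvl N (G'!0) < lvl N (G'!(\<gamma>-1))" using L' nth'[of 0] A(1) g1 by simp
      show "G'!(Suc (\<gamma>-1)) < G'!(\<gamma>-1) + int N" if "\<gamma> - 1 < n"
        using nth'[of \<gamma>] nth'[of "\<gamma>-1"] decL[of "\<gamma>-1" \<gamma>] ne True by simp
    qed
    thus ?thesis using True unfolding G'_def by simp
  next
    case False
    hence g: "\<gamma> = 1" using g1 by simp
    have L': "lvl N (G'!n) = lvl N (G!\<gamma>) + 1"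
      using nth'[of n] up[of n] lp g gn by (cases "n = 1") auto
    have "ginv N n G' n"
    proof (rule ginvI_A)
      show "length G' = Suc n" unfolding G'_def using len by simp
      show "1 \<le> n" "n \<le> n" using g gn by auto
      show "lvl N (G'!i) = lvl N (G'!n)" if "1 \<le> i" "i \<le> n" for i
        using that L' nth'[of i] up[of i] lp g by (cases "i = 1") auto
      show "lvl N (G'!i) = lvl N (G'!n) + 1" if "n < i" "i \<le> n" for i
        using that by simp
      show "G'!j < G'!i" if "n < i" "i < j" "j \<le> n" for i j
        using that by simp
      show "G'!j < G'!i" if "1 \<le> i" "i < j" "j \<le> n" for i j
      proof (cases "i = 1")
        case True
        then show ?thesis using that nth'[of i] nth'[of j] Wall[OF A(2), of j] g by simp
      next
        case False
        then show ?thesis using that nth'[of i] nth'[of j] decU[of i j] g by simp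
      qed
      show "lvl N (G'!0) < lvl N (G'!n)" using L' nth'[of 0] A(1) g by simp
      show "G'!(Suc n) < G'!n + int N" if "n < n" using that by simp
    qed
    thus ?thesis using False unfolding G'_def by simp
  qed
qed

lemma A_childB:
  assumes A: "lvl N (G!0) < lvl N (G!\<gamma>)" "\<gamma> < n \<longrightarrow> G!(Suc \<gamma>) < G!\<gamma> + int N"
  shows "ginv N n (cb \<gamma> (G!\<gamma> + int N) G) (if 2 \<le> \<gamma> then \<gamma> - 1 else n)"
proof -
  define G' where "G' = cb \<gamma> (G!\<gamma> + int N) G"
  have lenG: "\<gamma> < length G" using len gn by simp
  have lenG': "length G' = Suc n" unfolding G'_def using length_cb[OF lenG] len by simp
  have nth': "G'!i = (if i < \<gamma> then G!(Suc i) else if i = \<gamma> then G!\<gamma> + int N else G!i)"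
    if "i \<le> n" for i
    unfolding G'_def using nth_cb[OF lenG] that len by simp
  have lp: "lvl N (G!\<gamma> + int N) = lvl N (G!\<gamma>) + 1" using lvl_plus[OF N0] .
  show ?thesis
  proof (cases "2 \<le> \<gamma>")
    case True
    have ne: "\<gamma> - 1 < \<gamma>" "\<gamma> - 1 \<le> n" "Suc (\<gamma> - 1) = \<gamma>" "\<gamma> - 1 \<noteq> \<gamma>" using True gn by auto
    have L': "lvl N (G'!(\<gamma>-1)) = lvl N (G!\<gamma>)" using nth'[OF ne(2)] ne by simp
    have "ginv N n G' (\<gamma> - 1)"
    proof (rule ginvI_B)
      show "length G' = Suc n" by (rule lenG')
      show "1 \<le> \<gamma> - 1" "\<gamma> - 1 \<le> n" using True gn by auto
      show "lvl N (G'!i) = lvl N (G'!(\<gamma>-1))" if "1 \<le> i" "i \<le> \<gamma> - 1" for i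
      proof -
        have f: "i < \<gamma>" "i \<le> n" "1 \<le> Suc i" "Suc i \<le> \<gamma>" using that gn by auto
        thus ?thesis using L' nth'[OF f(2)] lo[OF f(3,4)] by simp
      qed
      show "lvl N (G'!i) = lvl N (G'!(\<gamma>-1)) + 1" if "\<gamma> - 1 < i" "i \<le> n" for i
      proof (cases "i = \<gamma>")
        case True
        thus ?thesis using L' nth'[OF that(2)] lp by simp
      next
        case False
        hence f: "\<gamma> < i" using that by auto
        thus ?thesis using L' nth'[OF that(2)] up[OF f that(2)] by simp
      qed
      show "G'!j < G'!i" if "\<gamma> - 1 < i" "i < j" "j \<le> n" for i j
      proof -
        have f: "i \<le> n" "\<gamma> < j" "\<gamma> \<le> i" using that by auto
        show ?thesis
        proof (cases "i = \<gamma>")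
          case True
          thus ?thesis using nth'[OF f(1)] nth'[OF that(3)] f Wall[OF A(2) f(2) that(3)] by simp
        next
          case False
          hence "\<gamma> < i" using f by simp
          thus ?thesis using nth'[OF f(1)] nth'[OF that(3)] f decU[OF _ that(2,3)] by simp
        qed
      qed
      show "G'!j < G'!i" if "1 \<le> i" "i < j" "j \<le> \<gamma> - 1" for i j
      proof -
        have f: "i \<le> n" "j \<le> n" "i < \<gamma>" "j < \<gamma>" "1 \<le> Suc i" "Suc i < Suc j" "Suc j \<le> \<gamma>"
          using that gn by auto
        thus ?thesis using nth'[OF f(1)] nth'[OF f(2)] decL[OF f(5,6,7)] by simp
      qed
      have f01: "0 \<le> n" "1 \<le> n" "0 < \<gamma>" "1 < \<gamma>" "1 \<le> (1::nat)" "1 \<le> \<gamma>" "1 < (2::nat)" "2 \<le> \<gamma>"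
        using True gn by auto
      have G0: "G'!0 = G!1" using nth'[OF f01(1)] f01 by simp
      have G1: "G'!1 = G!2" using nth'[OF f01(2)] f01 by (simp add: numeral_2_eq_2)
      show "lvl N (G'!0) = lvl N (G'!(\<gamma>-1))" using G0 L' lo[OF f01(5,6)] by simp
      show "G'!1 < G'!0" using G0 G1 decL[OF f01(5,7,8)] by simp
      show "G'!(Suc (\<gamma>-1)) < G'!(\<gamma>-1) - G'!0 + int N * lvl N (G'!(\<gamma>-1)) + int N + 1"
        if "\<gamma> - 1 < n"
      proof -
        have "G'!(Suc (\<gamma>-1)) = G!\<gamma> + int N" using nth'[OF gn] ne by simp
        moreover have "G'!(\<gamma>-1) = G!\<gamma>" using nth'[OF ne(2)] ne by simp
        moreover have "G!1 \<le> int N * lvl N (G!\<gamma>)" using lo_bnd[OF f01(5,6)] by simp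
        moreover have "int N * lvl N (G'!(\<gamma>-1)) = int N * lvl N (G!\<gamma>)" using L' by simp
        ultimately show ?thesis using G0 by linarith
      qed
    qed
    thus ?thesis using True unfolding G'_def by simp
  next
    case False
    hence g: "\<gamma> = 1" using g1 by simp
    have L': "lvl N (G'!n) = lvl N (G!\<gamma>) + 1"
    proof (cases "n = 1")
      case True thus ?thesis using nth'[of n] lp g by simp
    next
      case False
      hence "\<gamma> < n" using g gn by simp
      thus ?thesis using nth'[of n] up[of n] g by simp
    qed
    have "ginv N n G' n"
    proof (rule ginvI_A)
      show "length G' = Suc n" by (rule lenG')
      show "1 \<le> n" "n \<le> n" using g gn by auto
      show "lvl N (G'!i) = lvl N (G'!n)" if "1 \<le> i" "i \<le> n" for i
      proof (cases "i = 1")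
        case True thus ?thesis using L' nth'[OF that(2)] lp g by simp
      next
        case False
        hence "\<gamma> < i" using that g by simp
        thus ?thesis using L' nth'[OF that(2)] up[OF _ that(2)] g by simp
      qed
      show "lvl N (G'!i) = lvl N (G'!n) + 1" if "n < i" "i \<le> n" for i
        using that by simp
      show "G'!j < G'!i" if "n < i" "i < j" "j \<le> n" for i j
        using that by simp
      show "G'!j < G'!i" if "1 \<le> i" "i < j" "j \<le> n" for i j
      proof -
        have f: "i \<le> n" "\<gamma> < j" "\<not> j < \<gamma>" "j \<noteq> \<gamma>" using that g by auto
        show ?thesis
        proof (cases "i = 1")
          case True
          thus ?thesis using nth'[OF f(1)] nth'[OF that(3)] f g Wall[OF A(2) f(2) that(3)] by simp
        next
          case False
          hence "\<gamma> < i" using that g by simp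
          thus ?thesis using nth'[OF f(1)] nth'[OF that(3)] f decU[OF _ that(2,3)] by simp
        qed
      qed
      have "G'!0 = G!1" using nth'[of 0] g by simp
      thus "lvl N (G'!0) < lvl N (G'!n)" using L' g by simp
      show "G'!(Suc n) < G'!n + int N" if "n < n" using that by simp
    qed
    thus ?thesis using False unfolding G'_def by simp
  qed
qed

lemma B_facts:
  assumes B: "lvl N (G!0) = lvl N (G!\<gamma>)" "G!1 < G!0"
  shows "lvl N (G!\<gamma> - G!0 + int N * lvl N (G!\<gamma>) + int N + 1) = lvl N (G!\<gamma>) + 1"
proof -
  have a: "G!0 \<le> int N * lvl N (G!\<gamma>)" using bnd(2)[of "G!0"] B(1) by simp
  have b: "int N * lvl N (G!\<gamma>) - int N < G!\<gamma>" using bnd(1)[of "G!\<gamma>"] .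
  have c: "G!\<gamma> \<le> G!1" using decL'[of 1 \<gamma>] g1 by simp
  show ?thesis
    by (rule lvl_unique[OF N0]) (use a b c B(2) in \<open>simp_all add: distrib_left\<close>)
qed

lemma WallB:
  assumes C: "\<gamma> < n \<longrightarrow> G!(Suc \<gamma>) < G!\<gamma> - G!0 + int N * lvl N (G!\<gamma>) + int N + 1"
    and j: "\<gamma> < j" "j \<le> n"
  shows "G!j < G!\<gamma> - G!0 + int N * lvl N (G!\<gamma>) + int N + 1"
proof -
  have "G!j \<le> G!(Suc \<gamma>)" using decU'[of "Suc \<gamma>" j] j by simp
  thus ?thesis using C j by linarith
qed

lemma B_childA:
  assumes B: "lvl N (G!0) = lvl N (G!\<gamma>)" "G!1 < G!0"
    "\<gamma> < n \<longrightarrow> G!(Suc \<gamma>) < G!\<gamma> - G!0 + int N * lvl N (G!\<gamma>) + int N + 1"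
  shows "ginv N n (G[\<gamma> := G!\<gamma> - G!0 + int N * lvl N (G!\<gamma>) + int N + 1]) (if 2 \<le> \<gamma> then \<gamma> - 1 else n)"
proof -
  define g' where "g' = G!\<gamma> - G!0 + int N * lvl N (G!\<gamma>) + int N + 1"
  define G' where "G' = G[\<gamma> := g']"
  have lenG: "\<gamma> < length G" using len gn by simp
  have nth': "G'!i = (if i = \<gamma> then g' else G!i)" for i
    unfolding G'_def using lenG by simp
  have lp: "lvl N g' = lvl N (G!\<gamma>) + 1" unfolding g'_def using B_facts[OF B(1,2)] .
  have WB: "G!j < g'" if "\<gamma> < j" "j \<le> n" for j unfolding g'_def using WallB[OF B(3) that] .
  show ?thesis
  proof (cases "2 \<le> \<gamma>")
    case True
    have ne: "\<gamma> - 1 \<noteq> \<gamma>" "1 \<le> \<gamma> - 1" "\<gamma> - 1 \<le> \<gamma>" "1 \<noteq> \<gamma>" "0 \<noteq> \<gamma>" "\<gamma> - 1 < \<gamma>" using True by auto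
    have L': "lvl N (G'!(\<gamma>-1)) = lvl N (G!\<gamma>)" using nth'[of "\<gamma>-1"] lo[OF ne(2,3)] ne(1) by simp
    have "ginv N n G' (\<gamma> - 1)"
    proof (rule ginvI_B)
      show "length G' = Suc n" unfolding G'_def using len by simp
      show "1 \<le> \<gamma> - 1" "\<gamma> - 1 \<le> n" using True gn by auto
      show "lvl N (G'!i) = lvl N (G'!(\<gamma>-1))" if "1 \<le> i" "i \<le> \<gamma> - 1" for i
      proof -
        have "i \<noteq> \<gamma>" "i \<le> \<gamma>" using that by auto
        thus ?thesis using that L' nth'[of i] lo[of i] by simp
      qed
      show "lvl N (G'!i) = lvl N (G'!(\<gamma>-1)) + 1" if "\<gamma> - 1 < i" "i \<le> n" for i
      proof (cases "i = \<gamma>")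
        case True thus ?thesis using L' nth'[of i] lp by simp
      next
        case False
        hence "\<gamma> < i" using that by auto
        thus ?thesis using L' nth'[of i] up[OF _ that(2)] False by simp
      qed
      show "G'!j < G'!i" if "\<gamma> - 1 < i" "i < j" "j \<le> n" for i j
      proof (cases "i = \<gamma>")
        case True
        hence "\<gamma> < j" "j \<noteq> \<gamma>" using that by auto
        thus ?thesis using True nth'[of i] nth'[of j] WB[of j] that by simp
      next
        case False
        hence "\<gamma> < i" "j \<noteq> \<gamma>" using that by auto
        then show ?thesis using that nth'[of i] nth'[of j] decU[of i j] False by simp
      qed
      show "G'!j < G'!i" if "1 \<le> i" "i < j" "j \<le> \<gamma> - 1" for i j
      proof -
        have "i \<noteq> \<gamma>" "j \<noteq> \<gamma>" "j \<le> \<gamma>" using that by auto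
        thus ?thesis using that nth'[of i] nth'[of j] decL[of i j] by simp
      qed
      show "lvl N (G'!0) = lvl N (G'!(\<gamma>-1))" using L' nth'[of 0] B(1) ne by simp
      show "G'!1 < G'!0" using nth'[of 0] nth'[of 1] B(2) ne by simp
      show "G'!(Suc (\<gamma>-1)) < G'!(\<gamma>-1) - G'!0 + int N * lvl N (G'!(\<gamma>-1)) + int N + 1"
        if "\<gamma> - 1 < n"
      proof -
        have "G'!(Suc (\<gamma>-1)) = g'" using nth'[of \<gamma>] True by simp
        moreover have "G'!(\<gamma>-1) = G!(\<gamma>-1)" using nth'[of "\<gamma>-1"] ne by simp
        moreover have "G'!0 = G!0" using nth'[of 0] ne by simp
        moreover have "G!\<gamma> < G!(\<gamma>-1)" using decL[OF ne(2,6)] by simp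
        moreover have "int N * lvl N (G'!(\<gamma>-1)) = int N * lvl N (G!\<gamma>)" using L' by simp
        ultimately show ?thesis unfolding g'_def by linarith
      qed
    qed
    thus ?thesis using True unfolding G'_def g'_def by simp
  next
    case False
    hence g: "\<gamma> = 1" using g1 by simp
    have L': "lvl N (G'!n) = lvl N (G!\<gamma>) + 1"
    proof (cases "n = 1")
      case True thus ?thesis using nth'[of n] lp g by simp
    next
      case False
      hence "\<gamma> < n" using g gn by simp
      thus ?thesis using nth'[of n] up[of n] g by simp
    qed
    have "ginv N n G' n"
    proof (rule ginvI_A)
      show "length G' = Suc n" unfolding G'_def using len by simp
      show "1 \<le> n" "n \<le> n" using g gn by auto
      show "lvl N (G'!i) = lvl N (G'!n)" if "1 \<le> i" "i \<le> n" for i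
      proof (cases "i = 1")
        case True thus ?thesis using L' nth'[of i] lp g by simp
      next
        case False
        hence "\<gamma> < i" using that g by simp
        thus ?thesis using L' nth'[of i] up[OF _ that(2)] g False by simp
      qed
      show "lvl N (G'!i) = lvl N (G'!n) + 1" if "n < i" "i \<le> n" for i
        using that by simp
      show "G'!j < G'!i" if "n < i" "i < j" "j \<le> n" for i j
        using that by simp
      show "G'!j < G'!i" if "1 \<le> i" "i < j" "j \<le> n" for i j
      proof -
        have f: "\<gamma> < j" "j \<noteq> \<gamma>" using that g by auto
        show ?thesis
        proof (cases "i = 1")
          case True
          thus ?thesis using nth'[of i] nth'[of j] f g WB[OF f(1) that(3)] by simp
        next
          case False
          hence "\<gamma> < i" "i \<noteq> \<gamma>" using that g by auto
          thus ?thesis using nth'[of i] nth'[of j] f decU[OF _ that(2,3)] by simp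
        qed
      qed
      have "G'!0 = G!0" using nth'[of 0] g by simp
      thus "lvl N (G'!0) < lvl N (G'!n)" using L' B(1) by simp
      show "G'!(Suc n) < G'!n + int N" if "n < n" using that by simp
    qed
    thus ?thesis using False unfolding G'_def g'_def by simp
  qed
qed

lemma B_childB:
  assumes B: "lvl N (G!0) = lvl N (G!\<gamma>)" "G!1 < G!0"
    "\<gamma> < n \<longrightarrow> G!(Suc \<gamma>) < G!\<gamma> - G!0 + int N * lvl N (G!\<gamma>) + int N + 1"
  shows "ginv N n (cb \<gamma> (G!\<gamma> - G!0 + int N * lvl N (G!\<gamma>) + int N + 1) G) (if 2 \<le> \<gamma> then \<gamma> - 1 else n)"
proof -
  define g' where "g' = G!\<gamma> - G!0 + int N * lvl N (G!\<gamma>) + int N + 1"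
  define G' where "G' = cb \<gamma> g' G"
  have lenG: "\<gamma> < length G" using len gn by simp
  have lenG': "length G' = Suc n" unfolding G'_def using length_cb[OF lenG] len by simp
  have nth': "G'!i = (if i < \<gamma> then G!(Suc i) else if i = \<gamma> then g' else G!i)"
    if "i \<le> n" for i
    unfolding G'_def using nth_cb[OF lenG] that len by simp
  have lp: "lvl N g' = lvl N (G!\<gamma>) + 1" unfolding g'_def using B_facts[OF B(1,2)] .
  have WB: "G!j < g'" if "\<gamma> < j" "j \<le> n" for j unfolding g'_def using WallB[OF B(3) that] .
  show ?thesis
  proof (cases "2 \<le> \<gamma>")
    case True
    have ne: "\<gamma> - 1 < \<gamma>" "\<gamma> - 1 \<le> n" "Suc (\<gamma> - 1) = \<gamma>" "\<gamma> - 1 \<noteq> \<gamma>" using True gn by auto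
    have L': "lvl N (G'!(\<gamma>-1)) = lvl N (G!\<gamma>)" using nth'[OF ne(2)] ne by simp
    have "ginv N n G' (\<gamma> - 1)"
    proof (rule ginvI_B)
      show "length G' = Suc n" by (rule lenG')
      show "1 \<le> \<gamma> - 1" "\<gamma> - 1 \<le> n" using True gn by auto
      show "lvl N (G'!i) = lvl N (G'!(\<gamma>-1))" if "1 \<le> i" "i \<le> \<gamma> - 1" for i
      proof -
        have f: "i < \<gamma>" "i \<le> n" "1 \<le> Suc i" "Suc i \<le> \<gamma>" using that gn by auto
        thus ?thesis using L' nth'[OF f(2)] lo[OF f(3,4)] by simp
      qed
      show "lvl N (G'!i) = lvl N (G'!(\<gamma>-1)) + 1" if "\<gamma> - 1 < i" "i \<le> n" for i
      proof (cases "i = \<gamma>")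
        case True
        thus ?thesis using L' nth'[OF that(2)] lp by simp
      next
        case False
        hence f: "\<gamma> < i" using that by auto
        thus ?thesis using L' nth'[OF that(2)] up[OF f that(2)] by simp
      qed
      show "G'!j < G'!i" if "\<gamma> - 1 < i" "i < j" "j \<le> n" for i j
      proof -
        have f: "i \<le> n" "\<gamma> < j" "\<gamma> \<le> i" using that by auto
        show ?thesis
        proof (cases "i = \<gamma>")
          case True
          thus ?thesis using nth'[OF f(1)] nth'[OF that(3)] f WB[OF f(2) that(3)] by simp
        next
          case False
          hence "\<gamma> < i" using f by simp
          thus ?thesis using nth'[OF f(1)] nth'[OF that(3)] f decU[OF _ that(2,3)] by simp
        qed
      qed
      show "G'!j < G'!i" if "1 \<le> i" "i < j" "j \<le> \<gamma> - 1" for i j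
      proof -
        have f: "i \<le> n" "j \<le> n" "i < \<gamma>" "j < \<gamma>" "1 \<le> Suc i" "Suc i < Suc j" "Suc j \<le> \<gamma>"
          using that gn by auto
        thus ?thesis using nth'[OF f(1)] nth'[OF f(2)] decL[OF f(5,6,7)] by simp
      qed
      have f01: "0 \<le> n" "1 \<le> n" "0 < \<gamma>" "1 < \<gamma>" "1 \<le> (1::nat)" "1 \<le> \<gamma>" "1 < (2::nat)" "2 \<le> \<gamma>"
        using True gn by auto
      have G0: "G'!0 = G!1" using nth'[OF f01(1)] f01 by simp
      have G1: "G'!1 = G!2" using nth'[OF f01(2)] f01 by (simp add: numeral_2_eq_2)
      show "lvl N (G'!0) = lvl N (G'!(\<gamma>-1))" using G0 L' lo[OF f01(5,6)] by simp
      show "G'!1 < G'!0" using G0 G1 decL[OF f01(5,7,8)] by simp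
      show "G'!(Suc (\<gamma>-1)) < G'!(\<gamma>-1) - G'!0 + int N * lvl N (G'!(\<gamma>-1)) + int N + 1"
        if "\<gamma> - 1 < n"
      proof -
        have "G'!(Suc (\<gamma>-1)) = g'" using nth'[OF gn] ne by simp
        moreover have "G'!(\<gamma>-1) = G!\<gamma>" using nth'[OF ne(2)] ne by simp
        moreover have "int N * lvl N (G'!(\<gamma>-1)) = int N * lvl N (G!\<gamma>)" using L' by simp
        ultimately show ?thesis using G0 B(2) unfolding g'_def by linarith
      qed
    qed
    thus ?thesis using True unfolding G'_def g'_def by simp
  next
    case False
    hence g: "\<gamma> = 1" using g1 by simp
    have L': "lvl N (G'!n) = lvl N (G!\<gamma>) + 1"
    proof (cases "n = 1")
      case True thus ?thesis using nth'[of n] lp g by simp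
    next
      case False
      hence "\<gamma> < n" using g gn by simp
      thus ?thesis using nth'[of n] up[of n] g by simp
    qed
    have "ginv N n G' n"
    proof (rule ginvI_A)
      show "length G' = Suc n" by (rule lenG')
      show "1 \<le> n" "n \<le> n" using g gn by auto
      show "lvl N (G'!i) = lvl N (G'!n)" if "1 \<le> i" "i \<le> n" for i
      proof (cases "i = 1")
        case True thus ?thesis using L' nth'[OF that(2)] lp g by simp
      next
        case False
        hence "\<gamma> < i" using that g by simp
        thus ?thesis using L' nth'[OF that(2)] up[OF _ that(2)] g by simp
      qed
      show "lvl N (G'!i) = lvl N (G'!n) + 1" if "n < i" "i \<le> n" for i
        using that by simp
      show "G'!j < G'!i" if "n < i" "i < j" "j \<le> n" for i j
        using that by simp
      show "G'!j < G'!i" if "1 \<le> i" "i < j" "j \<le> n" for i j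
      proof -
        have f: "i \<le> n" "\<gamma> < j" "\<not> j < \<gamma>" "j \<noteq> \<gamma>" using that g by auto
        show ?thesis
        proof (cases "i = 1")
          case True
          thus ?thesis using nth'[OF f(1)] nth'[OF that(3)] f g WB[OF f(2) that(3)] by simp
        next
          case False
          hence "\<gamma> < i" using that g by simp
          thus ?thesis using nth'[OF f(1)] nth'[OF that(3)] f decU[OF _ that(2,3)] by simp
        qed
      qed
      have "G'!0 = G!1" using nth'[of 0] g by simp
      thus "lvl N (G'!0) < lvl N (G'!n)" using L' g by simp
      show "G'!(Suc n) < G'!n + int N" if "n < n" using that by simp
    qed
    thus ?thesis using False unfolding G'_def g'_def by simp
  qed
qed
end



lemma mset_perm:
  assumes "\<And>k. k < m \<Longrightarrow> \<sigma> k < m" "inj_on \<sigma> {..<m}"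
  shows "mset (map (\<lambda>k. f (\<sigma> k)) [0..<m]) = mset (map f [0..<m])"
proof -
  have im: "\<sigma> ` {..<m} = {..<m}"
    by (rule endo_inj_surj) (use assms in auto)
  have d: "distinct (map \<sigma> [0..<m])" using assms(2) by (simp add: distinct_map lessThan_atLeast0)
  have s: "set (map \<sigma> [0..<m]) = set [0..<m]" using im by (simp add: lessThan_atLeast0)
  have ms: "mset (map \<sigma> [0..<m]) = mset [0..<m]"
    using set_eq_iff_mset_eq_distinct[OF d distinct_upt] s by simp
  have eq: "map (\<lambda>k. f (\<sigma> k)) [0..<m] = map f (map \<sigma> [0..<m])" by simp
  have ms': "image_mset \<sigma> (mset [0..<m]) = mset [0..<m]" using ms by simp
  show ?thesis unfolding eq mset_map ms' ..
qed

lemma gsort_char: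
  assumes "mset S = mset ws" "sorted_wrt (\<lambda>a b. snd b < snd a) ws"
  shows "gsort S = ws"
proof -
  have inj: "inj_on snd (set ws)"
  proof (rule inj_onI)
    fix a b assume a: "a \<in> set ws" and b: "b \<in> set ws" and e: "snd a = snd b"
    obtain i where i: "i < length ws" "a = ws ! i" using a by (auto simp: in_set_conv_nth)
    obtain j where j: "j < length ws" "b = ws ! j" using b by (auto simp: in_set_conv_nth)
    have "\<not> i < j" using assms(2) i j e unfolding sorted_wrt_iff_nth_less by fastforce
    moreover have "\<not> j < i" using assms(2) i j e unfolding sorted_wrt_iff_nth_less by fastforce
    ultimately show "a = b" using i j by (metis linorder_neqE_nat)
  qed
  have "set S = set ws" using assms(1) by (metis set_mset_mset)
  hence inj': "inj_on snd (set S)" using inj by simp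
  have "sorted_wrt (\<lambda>x y. y < x) (map snd ws)" using assms(2) by (simp add: sorted_wrt_map)
  hence "sorted_wrt (\<lambda>x y. y \<le> x) (map snd ws)"
    by (rule sorted_wrt_mono_rel[rotated]) simp
  hence "sorted_wrt (\<le>) (rev (map snd ws))" by (simp add: sorted_wrt_rev)
  hence "sorted (map snd (rev ws))" by (simp add: rev_map)
  hence "sort_key snd S = rev ws"
    by (intro sort_key_inj_key_eq[OF _ inj']) (use assms(1) in simp_all)
  thus ?thesis unfolding gsort_def by simp
qed

lemma zip_map_nth: "length xs = m \<Longrightarrow> length ys = m \<Longrightarrow> zip xs ys = map (\<lambda>i. (xs!i, ys!i)) [0..<m]"
  by (rule nth_equalityI) simp_all



definition Rel :: "nat \<Rightarrow> ('n::finite pt \<times> int) list \<Rightarrow> 'n pt list \<times> nat \<Rightarrow> bool" where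
  "Rel N S M \<longleftrightarrow> (\<exists>G. ginv N CARD('n) G (snd M) \<and> length (fst M) = Suc CARD('n) \<and>
      mset S = mset (zip (fst M) G))"

lemma maub_children_eq:
  "maub_children (vs, \<gamma>) =
     {(vs[\<gamma> := midpoint (vs!0) (vs!\<gamma>)], if 2 \<le> \<gamma> then \<gamma> - 1 else CARD('n)),
      (cb \<gamma> (midpoint (vs!0) (vs!\<gamma>)) vs, if 2 \<le> \<gamma> then \<gamma> - 1 else CARD('n))}"
  for vs :: "'n::finite pt list"
  unfolding maub_children_def cb_def Let_def by simp

lemma child_update:
  assumes "length vs = Suc n" "length G = Suc n" "\<gamma> \<le> n"
    "k < length ws" "mset ws = mset (zip vs G)" "ws ! k = (vs!\<gamma>, G!\<gamma>)"
  shows "mset (ws[k := (x, g)]) = mset (zip (vs[\<gamma> := x]) (G[\<gamma> := g]))"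
proof -
  have "mset (ws[k := (x, g)]) = add_mset (x, g) (mset ws - {#ws!k#})" by (rule mset_update[OF assms(4)])
  moreover have "mset (zip (vs[\<gamma> := x]) (G[\<gamma> := g])) = add_mset (x, g) (mset (zip vs G) - {#zip vs G ! \<gamma>#})"
  proof -
    have "\<gamma> < length (zip vs G)" using assms(1-3) by simp
    thus ?thesis unfolding zip_update by (rule mset_update)
  qed
  moreover have "zip vs G ! \<gamma> = (vs!\<gamma>, G!\<gamma>)" using assms(1-3) by simp
  ultimately show ?thesis using assms(5,6) by (simp only:)
qed

lemma child_cb:
  assumes "length vs = Suc n" "length G = Suc n" "\<gamma> \<le> n"
    "k < length ws" "mset ws = mset (zip vs G)" "ws ! k = (vs!0, G!0)"
  shows "mset (ws[k := (x, g)]) = mset (zip (cb \<gamma> x vs) (cb \<gamma> g G))"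
proof -
  have "mset (ws[k := (x, g)]) = add_mset (x, g) (mset ws - {#ws!k#})" by (rule mset_update[OF assms(4)])
  moreover have "mset (zip (cb \<gamma> x vs) (cb \<gamma> g G)) = add_mset (x, g) (mset (zip vs G) - {#zip vs G ! 0#})"
  proof -
    have l: "length vs = length G" using assms(1,2) by simp
    have "\<gamma> < length (zip vs G)" using assms(1-3) by simp
    thus ?thesis unfolding zip_cb[OF l] by (rule mset_cb)
  qed
  moreover have "zip vs G ! 0 = (vs!0, G!0)" using assms(1-3) by simp
  ultimately show ?thesis using assms(5,6) by (simp only:)
qed


lemma lvl_ge: "N > 0 \<Longrightarrow> ginv N n G \<gamma> \<Longrightarrow> 1 \<le> k \<Longrightarrow> k \<le> n \<Longrightarrow> lvl N (G!\<gamma>) \<le> lvl N (G!k)"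
  using lo[of N n G \<gamma> k] up[of N n G \<gamma> k] by (cases "k \<le> \<gamma>") auto

lemma simA:
  fixes vs :: "'n::finite pt list"
  assumes nC: "n = CARD('n)" and N0: "N > 0" and inv: "ginv N n G \<gamma>" and lv: "length vs = Suc n"
    and ms: "mset S = mset (zip vs G)"
    and A: "lvl N (G!0) < lvl N (G!\<gamma>)" "\<gamma> < n \<longrightarrow> G!(Suc \<gamma>) < G!\<gamma> + int N"
  shows "\<exists>S1 S2 M1 M2. gen_children N S = {S1, S2} \<and> maub_children (vs, \<gamma>) = {M1, M2} \<and>
           Rel N S1 M1 \<and> Rel N S2 M2"
proof -
  have lG: "length G = Suc n" by (rule len[OF N0 inv])
  have g1: "1 \<le> \<gamma>" by (rule g1[OF N0 inv])
  have gn: "\<gamma> \<le> n" by (rule gn[OF N0 inv])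
  define \<sigma> where "\<sigma> k = (if k < n - \<gamma> then \<gamma> + 1 + k else if k < n then k + \<gamma> + 1 - n else 0)" for k
  define ws where "ws = map (\<lambda>k. (vs!\<sigma> k, G!\<sigma> k)) [0..<Suc n]"
  have \<sigma>b: "\<sigma> k < Suc n" if "k < Suc n" for k using gn that unfolding \<sigma>_def by auto
  have \<sigma>i: "inj_on \<sigma> {..<Suc n}" unfolding inj_on_def \<sigma>_def using gn g1 by auto
  have mws: "mset ws = mset (zip vs G)"
    unfolding ws_def zip_map_nth[OF lv lG] by (rule mset_perm[where f="\<lambda>i. (vs!i, G!i)", OF \<sigma>b \<sigma>i])
  have key: "G!(\<sigma> j) < G!(\<sigma> i)" if ij: "i < j" "j < Suc n" for i j
  proof (cases "j = n")
    case True
    hence s0: "\<sigma> j = 0" unfolding \<sigma>_def by simp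
    have r: "1 \<le> \<sigma> i" "\<sigma> i \<le> n" using ij True gn unfolding \<sigma>_def by auto
    have "lvl N (G!0) < lvl N (G!(\<sigma> i))" using lvl_ge[OF N0 inv r] A(1) by simp
    thus ?thesis using s0 lvl_lt[OF N0] by simp
  next
    case False
    hence jn: "j < n" using ij by simp
    show ?thesis
    proof (cases "i < n - \<gamma>")
      case True
      hence si: "\<sigma> i = \<gamma> + 1 + i" unfolding \<sigma>_def by simp
      show ?thesis
      proof (cases "j < n - \<gamma>")
        case True
        hence "\<sigma> j = \<gamma> + 1 + j" unfolding \<sigma>_def by simp
        moreover have "\<gamma> < \<gamma> + 1 + i" "\<gamma> + 1 + i < \<gamma> + 1 + j" "\<gamma> + 1 + j \<le> n" using True ij by auto
        ultimately show ?thesis using si decU[OF N0 inv] by simp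
      next
        case False
        hence sj: "\<sigma> j = j + \<gamma> + 1 - n" unfolding \<sigma>_def using jn by simp
        have r: "1 \<le> j + \<gamma> + 1 - n" "j + \<gamma> + 1 - n \<le> \<gamma>" "\<gamma> < \<gamma> + 1 + i" "\<gamma> + 1 + i \<le> n"
          using False jn True gn by auto
        have "lvl N (G!(\<sigma> j)) < lvl N (G!(\<sigma> i))"
          using sj si lo[OF N0 inv r(1,2)] up[OF N0 inv r(3,4)] by simp
        thus ?thesis using lvl_lt[OF N0] by simp
      qed
    next
      case False
      hence si: "\<sigma> i = i + \<gamma> + 1 - n" "\<sigma> j = j + \<gamma> + 1 - n" unfolding \<sigma>_def using jn ij by auto
      have r: "1 \<le> i + \<gamma> + 1 - n" "i + \<gamma> + 1 - n < j + \<gamma> + 1 - n" "j + \<gamma> + 1 - n \<le> \<gamma>"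
        using False jn ij gn by auto
      show ?thesis using si decL[OF N0 inv r] by simp
    qed
  qed
  have nthws: "ws!k = (vs!\<sigma> k, G!\<sigma> k)" if "k < Suc n" for k
    unfolding ws_def using that by (simp del: upt_Suc)
  have lws: "length ws = Suc n" unfolding ws_def by simp
  have srt: "sorted_wrt (\<lambda>a b. snd b < snd a) ws"
    unfolding sorted_wrt_iff_nth_less lws
  proof (intro allI impI)
    fix i j assume "i < j" "j < Suc n"
    thus "snd (ws!j) < snd (ws!i)" using nthws[of i] nthws[of j] key by simp
  qed
  have gs: "gsort S = ws" by (rule gsort_char) (use ms mws srt in simp_all)
  have "\<not> n < n - \<gamma>" by arith
  hence s0: "\<sigma> n = 0" unfolding \<sigma>_def by simp
  have wsn: "ws!n = (vs!0, G!0)" using nthws[of n] s0 by simp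
  have s1: "\<sigma> (n - 1) = \<gamma>" unfolding \<sigma>_def using g1 gn by auto
  have wsn1: "ws!(n-1) = (vs!\<gamma>, G!\<gamma>)" using nthws[of "n-1"] s1 by simp
  define mp where "mp = midpoint (vs!0) (vs!\<gamma>)"
  have mps: "midpoint (vs!\<gamma>) (vs!0) = mp" unfolding mp_def by (rule midpoint_sym)
  define \<gamma>' where "\<gamma>' = (if 2 \<le> \<gamma> then \<gamma> - 1 else n)"
  have lne: "lvl N (snd (ws!n)) \<noteq> lvl N (snd (ws!(n-1)))" using wsn wsn1 A(1) by simp
  have gc: "gen_children N S = {ws[n-1 := (mp, G!\<gamma> + int N)], ws[n := (mp, G!\<gamma> + int N)]}"
    unfolding gen_children_def gs Let_def using lws lne wsn wsn1 mps by simp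
  have mc: "maub_children (vs, \<gamma>) = {(vs[\<gamma> := mp], \<gamma>'), (cb \<gamma> mp vs, \<gamma>')}"
    unfolding maub_children_eq mp_def \<gamma>'_def nC ..
  have R1: "Rel N (ws[n-1 := (mp, G!\<gamma> + int N)]) (vs[\<gamma> := mp], \<gamma>')"
    unfolding Rel_def fst_conv snd_conv
  proof (intro exI conjI)
    show "ginv N CARD('n) (G[\<gamma> := G!\<gamma> + int N]) \<gamma>'"
      using A_childA[OF N0 inv A] unfolding \<gamma>'_def nC .
    show "length (vs[\<gamma> := mp]) = Suc CARD('n)" using lv nC by simp
    show "mset (ws[n-1 := (mp, G!\<gamma> + int N)]) = mset (zip (vs[\<gamma> := mp]) (G[\<gamma> := G!\<gamma> + int N]))"
      by (rule child_update[OF lv lG gn _ mws wsn1]) (use lws in simp)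
  qed
  have R2: "Rel N (ws[n := (mp, G!\<gamma> + int N)]) (cb \<gamma> mp vs, \<gamma>')"
    unfolding Rel_def fst_conv snd_conv
  proof (intro exI conjI)
    show "ginv N CARD('n) (cb \<gamma> (G!\<gamma> + int N) G) \<gamma>'"
      using A_childB[OF N0 inv A] unfolding \<gamma>'_def nC .
    show "length (cb \<gamma> mp vs) = Suc CARD('n)" using lv nC gn length_cb[of \<gamma> vs mp] by simp
    show "mset (ws[n := (mp, G!\<gamma> + int N)]) = mset (zip (cb \<gamma> mp vs) (cb \<gamma> (G!\<gamma> + int N) G))"
      by (rule child_cb[OF lv lG gn _ mws wsn]) (use lws in simp)
  qed
  show ?thesis using gc mc R1 R2 by blast
qed


lemma simB:
  fixes vs :: "'n::finite pt list"
  assumes nC: "n = CARD('n)" and N0: "N > 0" and inv: "ginv N n G \<gamma>" and lv: "length vs = Suc n"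
    and ms: "mset S = mset (zip vs G)"
    and B: "lvl N (G!0) = lvl N (G!\<gamma>)" "G!1 < G!0"
       "\<gamma> < n \<longrightarrow> G!(Suc \<gamma>) < G!\<gamma> - G!0 + int N * lvl N (G!\<gamma>) + int N + 1"
  shows "\<exists>S1 S2 M1 M2. gen_children N S = {S1, S2} \<and> maub_children (vs, \<gamma>) = {M1, M2} \<and>
           Rel N S1 M1 \<and> Rel N S2 M2"
proof -
  have lG: "length G = Suc n" by (rule len[OF N0 inv])
  have g1: "1 \<le> \<gamma>" by (rule g1[OF N0 inv])
  have gn: "\<gamma> \<le> n" by (rule gn[OF N0 inv])
  define \<sigma> where "\<sigma> k = (if k < n - \<gamma> then \<gamma> + 1 + k else if k = n - \<gamma> then 0 else k + \<gamma> - n)" for k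
  define ws where "ws = map (\<lambda>k. (vs!\<sigma> k, G!\<sigma> k)) [0..<Suc n]"
  have \<sigma>b: "\<sigma> k < Suc n" if "k < Suc n" for k using gn that unfolding \<sigma>_def by auto
  have \<sigma>i: "inj_on \<sigma> {..<Suc n}" unfolding inj_on_def \<sigma>_def using gn g1 by auto
  have mws: "mset ws = mset (zip vs G)"
    unfolding ws_def zip_map_nth[OF lv lG] by (rule mset_perm[where f="\<lambda>i. (vs!i, G!i)", OF \<sigma>b \<sigma>i])
  have key: "G!(\<sigma> j) < G!(\<sigma> i)" if ij: "i < j" "j < Suc n" for i j
  proof (cases "i < n - \<gamma>")
    case True
    hence si: "\<sigma> i = \<gamma> + 1 + i" unfolding \<sigma>_def by simp
    have ri: "\<gamma> < \<gamma> + 1 + i" "\<gamma> + 1 + i \<le> n" using True by auto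
    show ?thesis
    proof (cases "j < n - \<gamma>")
      case True
      hence "\<sigma> j = \<gamma> + 1 + j" unfolding \<sigma>_def by simp
      moreover have "\<gamma> + 1 + i < \<gamma> + 1 + j" "\<gamma> + 1 + j \<le> n" using True ij by auto
      ultimately show ?thesis using si decU[OF N0 inv ri(1)] by simp
    next
      case False
      have "lvl N (G!(\<sigma> j)) = lvl N (G!\<gamma>)"
      proof (cases "j = n - \<gamma>")
        case True thus ?thesis unfolding \<sigma>_def using B(1) by simp
      next
        case F2: False
        hence sj: "\<sigma> j = j + \<gamma> - n" unfolding \<sigma>_def using False by simp
        have hh: "1 \<le> j + \<gamma> - n" "j + \<gamma> - n \<le> \<gamma>" using False F2 ij gn by auto
        show ?thesis using sj lo[OF N0 inv hh] by simp
      qed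
      hence "lvl N (G!(\<sigma> j)) < lvl N (G!(\<sigma> i))"
        using si up[OF N0 inv ri] by simp
      thus ?thesis using lvl_lt[OF N0] by simp
    qed
  next
    case False
    have sj: "\<sigma> j = j + \<gamma> - n" "1 \<le> j + \<gamma> - n" "j + \<gamma> - n \<le> \<gamma>"
      unfolding \<sigma>_def using False ij gn by auto
    show ?thesis
    proof (cases "i = n - \<gamma>")
      case True
      hence "\<sigma> i = 0" unfolding \<sigma>_def by simp
      moreover have "G!(j + \<gamma> - n) \<le> G!1" using decL'[OF N0 inv _ sj(2,3)] by simp
      ultimately show ?thesis using sj B(2) by simp
    next
      case F2: False
      hence si: "\<sigma> i = i + \<gamma> - n" unfolding \<sigma>_def using False by simp
      have r: "1 \<le> i + \<gamma> - n" "i + \<gamma> - n < j + \<gamma> - n" using False F2 ij gn by auto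
      show ?thesis using si sj decL[OF N0 inv r sj(3)] by simp
    qed
  qed
  have nthws: "ws!k = (vs!\<sigma> k, G!\<sigma> k)" if "k < Suc n" for k
    unfolding ws_def using that by (simp del: upt_Suc)
  have lws: "length ws = Suc n" unfolding ws_def by simp
  have srt: "sorted_wrt (\<lambda>a b. snd b < snd a) ws"
    unfolding sorted_wrt_iff_nth_less lws
  proof (intro allI impI)
    fix i j assume "i < j" "j < Suc n"
    thus "snd (ws!j) < snd (ws!i)" using nthws[of i] nthws[of j] key by simp
  qed
  have gs: "gsort S = ws" by (rule gsort_char) (use ms mws srt in simp_all)
  have "\<not> n < n - \<gamma>" "n \<noteq> n - \<gamma>" using g1 gn by arith+
  hence sn: "\<sigma> n = \<gamma>" unfolding \<sigma>_def using gn by simp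
  have wsn: "ws!n = (vs!\<gamma>, G!\<gamma>)" using nthws[of n] sn by simp
  have s0: "\<sigma> (n - \<gamma>) = 0" unfolding \<sigma>_def by simp
  have ws0: "ws!(n - \<gamma>) = (vs!0, G!0)" using nthws[of "n - \<gamma>"] s0 by simp
  have lvn1: "lvl N (snd (ws!(n-1))) = lvl N (G!\<gamma>)"
  proof (cases "\<gamma> = 1")
    case True thus ?thesis using ws0 B(1) by simp
  next
    case False
    hence h: "\<sigma> (n - 1) = \<gamma> - 1" "1 \<le> \<gamma> - 1" "\<gamma> - 1 \<le> \<gamma>" "n - 1 < Suc n" unfolding \<sigma>_def using g1 gn by auto
    thus ?thesis using nthws[OF h(4)] lo[OF N0 inv h(2,3)] by simp
  qed
  have least: "(LEAST k. lvl N (snd (ws!k)) = lvl N (G!\<gamma>)) = n - \<gamma>"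
  proof (rule Least_equality)
    show "lvl N (snd (ws!(n - \<gamma>))) = lvl N (G!\<gamma>)" using ws0 B(1) by simp
    fix y assume y: "lvl N (snd (ws!y)) = lvl N (G!\<gamma>)"
    show "n - \<gamma> \<le> y"
    proof (rule ccontr)
      assume "\<not> n - \<gamma> \<le> y"
      hence yy: "y < n - \<gamma>" "y < Suc n" "\<gamma> < \<gamma> + 1 + y" "\<gamma> + 1 + y \<le> n" by auto
      hence "\<sigma> y = \<gamma> + 1 + y" unfolding \<sigma>_def by simp
      hence "lvl N (snd (ws!y)) = lvl N (G!\<gamma>) + 1" using nthws[OF yy(2)] up[OF N0 inv yy(3,4)] by simp
      thus False using y by simp
    qed
  qed
  define mp where "mp = midpoint (vs!0) (vs!\<gamma>)"
  define g' where "g' = G!\<gamma> - G!0 + int N * lvl N (G!\<gamma>) + int N + 1"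
  have vt: "G!\<gamma> + 2 * int N + 1 - vtype N (G!0) = g'"
    unfolding g'_def vtype_eq[OF N0] B(1) by (simp add: algebra_simps)
  define \<gamma>' where "\<gamma>' = (if 2 \<le> \<gamma> then \<gamma> - 1 else n)"
  have gc0: "gen_children N S = {ws[n - \<gamma> := (mp, G!\<gamma> + 2 * int N + 1 - vtype N (G!0))],
                                 ws[n := (mp, G!\<gamma> + 2 * int N + 1 - vtype N (G!0))]}"
    unfolding gen_children_def gs Let_def using lws lvn1 wsn ws0 least by (simp add: mp_def)
  have gc: "gen_children N S = {ws[n := (mp, g')], ws[n - \<gamma> := (mp, g')]}"
    unfolding gc0 vt by (rule insert_commute)
  have mc: "maub_children (vs, \<gamma>) = {(vs[\<gamma> := mp], \<gamma>'), (cb \<gamma> mp vs, \<gamma>')}"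
    unfolding maub_children_eq mp_def \<gamma>'_def nC ..
  have R1: "Rel N (ws[n := (mp, g')]) (vs[\<gamma> := mp], \<gamma>')"
    unfolding Rel_def fst_conv snd_conv
  proof (intro exI conjI)
    show "ginv N CARD('n) (G[\<gamma> := g']) \<gamma>'"
      using B_childA[OF N0 inv B] unfolding \<gamma>'_def nC g'_def .
    show "length (vs[\<gamma> := mp]) = Suc CARD('n)" using lv nC by simp
    show "mset (ws[n := (mp, g')]) = mset (zip (vs[\<gamma> := mp]) (G[\<gamma> := g']))"
      by (rule child_update[OF lv lG gn _ mws wsn]) (use lws in simp)
  qed
  have R2: "Rel N (ws[n - \<gamma> := (mp, g')]) (cb \<gamma> mp vs, \<gamma>')"
    unfolding Rel_def fst_conv snd_conv
  proof (intro exI conjI)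
    show "ginv N CARD('n) (cb \<gamma> g' G) \<gamma>'"
      using B_childB[OF N0 inv B] unfolding \<gamma>'_def nC g'_def .
    show "length (cb \<gamma> mp vs) = Suc CARD('n)" using lv nC gn length_cb[of \<gamma> vs mp] by simp
    show "mset (ws[n - \<gamma> := (mp, g')]) = mset (zip (cb \<gamma> mp vs) (cb \<gamma> g' G))"
      by (rule child_cb[OF lv lG gn _ mws ws0]) (use lws in simp)
  qed
  show ?thesis using gc mc R1 R2 by blast
qed



lemma sim:
  assumes N0: "N > 0" and R: "Rel N S M"
  shows "\<exists>S1 S2 M1 M2. gen_children N S = {S1, S2} \<and> maub_children M = {M1, M2} \<and>
           Rel N S1 M1 \<and> Rel N S2 M2"
proof -
  obtain vs \<gamma> where M: "M = (vs, \<gamma>)" by (cases M)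
  from R obtain G where inv: "ginv N CARD('a) G \<gamma>" and lv: "length vs = Suc CARD('a)"
    and ms: "mset S = mset (zip vs G)"
    unfolding Rel_def M by auto
  from cases_AB[OF N0 inv] show ?thesis
  proof
    assume A: "lvl N (G!0) < lvl N (G!\<gamma>) \<and> (\<gamma> < CARD('a) \<longrightarrow> G!(Suc \<gamma>) < G!\<gamma> + int N)"
    show ?thesis unfolding M
      by (rule simA[OF refl N0 inv lv ms]) (use A in auto)
  next
    assume B: "lvl N (G!0) = lvl N (G!\<gamma>) \<and> G!1 < G!0 \<and>
       (\<gamma> < CARD('a) \<longrightarrow> G!(Suc \<gamma>) < G!\<gamma> - G!0 + int N * lvl N (G!\<gamma>) + int N + 1)"
    show ?thesis unfolding M
      by (rule simB[OF refl N0 inv lv ms]) (use B in auto)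
  qed
qed

lemma gen_to_maub:
  assumes "S' \<in> gen_desc N S" "Rel N S M" "N > 0"
  shows "\<exists>M' \<in> maub_desc M. Rel N S' M'"
  using assms(1)
proof induct
  case gen_root
  show ?case using assms(2) maub_desc.maub_root by blast
next
  case (gen_step S' S'')
  then obtain M' where M': "M' \<in> maub_desc M" "Rel N S' M'" by blast
  obtain S1 S2 M1 M2 where s: "gen_children N S' = {S1, S2}" "maub_children M' = {M1, M2}"
    "Rel N S1 M1" "Rel N S2 M2" using sim[OF assms(3) M'(2)] by blast
  have "M1 \<in> maub_desc M" "M2 \<in> maub_desc M"
    using maub_desc.maub_step[OF M'(1)] s(2) by auto
  thus ?case using gen_step(3) s by auto
qed

lemma maub_to_gen:
  assumes "M' \<in> maub_desc M" "Rel N S M" "N > 0"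
  shows "\<exists>S' \<in> gen_desc N S. Rel N S' M'"
  using assms(1)
proof induct
  case maub_root
  show ?case using assms(2) gen_desc.gen_root by blast
next
  case (maub_step M' M'')
  then obtain S' where S': "S' \<in> gen_desc N S" "Rel N S' M'" by blast
  obtain S1 S2 M1 M2 where s: "gen_children N S' = {S1, S2}" "maub_children M' = {M1, M2}"
    "Rel N S1 M1" "Rel N S2 M2" using sim[OF assms(3) S'(2)] by blast
  have "S1 \<in> gen_desc N S" "S2 \<in> gen_desc N S"
    using gen_desc.gen_step[OF S'(1)] s(1) by auto
  thus ?case using maub_step(3) s by auto
qed

lemma Rel_set:
  assumes "Rel N S M" shows "set (map fst S) = set (fst M)"
proof -
  from assms obtain G where inv: "ginv N CARD('a) G (snd M)" and lv: "length (fst M) = Suc CARD('a)"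
    and ms: "mset S = mset (zip (fst M) G)"
    unfolding Rel_def by auto
  have lG: "length G = Suc CARD('a)" using inv unfolding ginv_def by blast
  have "set S = set (zip (fst M) G)" using ms by (metis set_mset_mset)
  hence "set (map fst S) = set (map fst (zip (fst M) G))" by simp
  also have "map fst (zip (fst M) G) = fst M" using lv lG by simp
  finally show ?thesis .
qed

lemma desc_eq:
  assumes "Rel N S M" "N > 0"
  shows "(\<lambda>S. set (map fst S)) ` gen_desc N S = (\<lambda>M. set (fst M)) ` maub_desc M"
proof (rule equalityI; rule subsetI)
  fix x assume "x \<in> (\<lambda>S. set (map fst S)) ` gen_desc N S"
  then obtain S' where S': "S' \<in> gen_desc N S" "x = set (map fst S')" by blast
  obtain M' where "M' \<in> maub_desc M" "Rel N S' M'" using gen_to_maub[OF S'(1) assms] by blast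
  thus "x \<in> (\<lambda>M. set (fst M)) ` maub_desc M" using S'(2) Rel_set by blast
next
  fix x assume "x \<in> (\<lambda>M. set (fst M)) ` maub_desc M"
  then obtain M' where M': "M' \<in> maub_desc M" "x = set (fst M')" by blast
  obtain S' where "S' \<in> gen_desc N S" "Rel N S' M'" using maub_to_gen[OF M'(1) assms] by blast
  thus "x \<in> (\<lambda>S. set (map fst S)) ` gen_desc N S" using M'(2) Rel_set by (metis image_eqI)
qed


lemma lvl0: "N > 0 \<Longrightarrow> x < N \<Longrightarrow> lvl N (- int x) = 0"
  by (rule lvl_unique) auto

lemma lvlN: "N > 0 \<Longrightarrow> lvl N (- int N) = -1"
  by (rule lvl_unique) auto

lemma zip_map_self: "zip xs (map f xs) = map (\<lambda>x. (x, f x)) xs"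
  by (induct xs) auto

lemma init_Rel:
  fixes vs :: "'n::finite pt list"
  assumes N0: "N > 0" and lv: "length vs = Suc CARD('n)"
    and srt: "sorted_wrt (\<lambda>a b. c a < c b) vs" and cN: "\<forall>v\<in>set vs. c v \<le> N"
  shows "Rel N (gen_init c vs) (maub_init N c vs)"
proof -
  define n where "n = CARD('n)"
  have n1: "1 \<le> n" unfolding n_def by simp
  have lv': "length vs = Suc n" using lv n_def by simp
  have mono: "c (vs!i) < c (vs!j)" if "i < j" "j < Suc n" for i j
    using srt that lv' unfolding sorted_wrt_iff_nth_less by auto
  have cle: "c (vs!i) \<le> N" if "i < Suc n" for i using cN that lv' by auto
  have "vs \<noteq> []" using lv' by auto
  hence lastv: "last vs = vs!n" using lv' by (simp add: last_conv_nth)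
  show ?thesis
  proof (cases "c (last vs) = N")
    case True
    define G where "G = - int N # map (\<lambda>v. - int (c v)) (butlast vs)"
    have mi: "maub_init N c vs = (last vs # butlast vs, n)" unfolding maub_init_def n_def using True by simp
    have lb: "length (butlast vs) = n" using lv' by simp
    have Gi: "G!i = - int (c (vs!(i-1)))" if ii: "1 \<le> i" "i \<le> n" for i
    proof -
      obtain k where k: "i = Suc k" using ii by (cases i) auto
      have "k < n" using ii k by simp
      thus ?thesis unfolding G_def k using lb by (simp add: nth_butlast)
    qed
    have clt: "c (vs!(i-1)) < N" if "1 \<le> i" "i \<le> n" for i
      using mono[of "i-1" n] that True lastv by simp
    have lv0: "lvl N (G!i) = 0" if "1 \<le> i" "i \<le> n" for i
      using Gi[OF that] lvl0[OF N0 clt[OF that]] by simp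
    have inv: "ginv N n G n"
    proof (rule ginvI_A)
      show "length G = Suc n" unfolding G_def using lb by simp
      show "1 \<le> n" "n \<le> n" using n1 by auto
      show "lvl N (G!i) = lvl N (G!n)" if "1 \<le> i" "i \<le> n" for i
        using lv0[OF that] lv0[OF n1 order.refl] by simp
      show "lvl N (G!i) = lvl N (G!n) + 1" if "n < i" "i \<le> n" for i using that by simp
      show "G!j < G!i" if "n < i" "i < j" "j \<le> n" for i j using that by simp
      show "G!j < G!i" if "1 \<le> i" "i < j" "j \<le> n" for i j
      proof -
        have "c (vs!(i-1)) < c (vs!(j-1))" using mono[of "i-1" "j-1"] that by simp
        thus ?thesis using Gi[of i] Gi[of j] that by simp
      qed
      show "lvl N (G!0) < lvl N (G!n)" using lv0[OF n1 order.refl] lvlN[OF N0] unfolding G_def by simp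
      show "G!(Suc n) < G!n + int N" if "n < n" using that by simp
    qed
    have "mset (gen_init c vs) = mset (zip (last vs # butlast vs) G)"
    proof -
      have vs: "vs = butlast vs @ [last vs]" using lv' by (metis append_butlast_last_id list.size(3) nat.distinct(1))
      have "mset (gen_init c vs) = mset (map (\<lambda>v. (v, - int (c v))) (butlast vs @ [last vs]))"
        unfolding gen_init_def using vs by metis
      also have "\<dots> = mset (zip (last vs # butlast vs) G)"
        unfolding G_def using True by (simp add: zip_map_self)
      finally show ?thesis .
    qed
    thus ?thesis unfolding Rel_def mi using inv lv' n_def by auto
  next
    case False
    define G where "G = map (\<lambda>v. - int (c v)) vs"
    have mi: "maub_init N c vs = (vs, n)" unfolding maub_init_def n_def using False by simp
    have Gi: "G!i = - int (c (vs!i))" if "i \<le> n" for i unfolding G_def using that lv' by simp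
    have clt: "c (vs!i) < N" if "i \<le> n" for i
    proof (cases "i = n")
      case True thus ?thesis using False lastv cle[of n] by simp
    next
      case F: False
      thus ?thesis using mono[of i n] that cle[of n] by simp
    qed
    have lv0: "lvl N (G!i) = 0" if "i \<le> n" for i
      using Gi[OF that] lvl0[OF N0 clt[OF that]] by simp
    have inv: "ginv N n G n"
    proof (rule ginvI_B)
      show "length G = Suc n" unfolding G_def using lv' by simp
      show "1 \<le> n" "n \<le> n" using n1 by auto
      show "lvl N (G!i) = lvl N (G!n)" if "1 \<le> i" "i \<le> n" for i
        using lv0[OF that(2)] lv0[OF order.refl] by simp
      show "lvl N (G!i) = lvl N (G!n) + 1" if "n < i" "i \<le> n" for i using that by simp
      show "G!j < G!i" if "n < i" "i < j" "j \<le> n" for i j using that by simp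
      show "G!j < G!i" if "1 \<le> i" "i < j" "j \<le> n" for i j
        using Gi[of i] Gi[of j] mono[of i j] that by simp
      show "lvl N (G!0) = lvl N (G!n)" using lv0[of 0] lv0[OF order.refl] by simp
      show "G!1 < G!0" using Gi[of 0] Gi[of 1] mono[of 0 1] n1 by simp
      show "G!(Suc n) < G!n - G!0 + int N * lvl N (G!n) + int N + 1" if "n < n" using that by simp
    qed
    have "mset (gen_init c vs) = mset (zip vs G)"
      unfolding gen_init_def G_def by (simp add: zip_map_self)
    thus ?thesis unfolding Rel_def mi using inv lv' n_def by auto
  qed
qed

lemma sorted_distinct: "sorted_wrt (\<lambda>a b. (c::_ \<Rightarrow> nat) a < c b) vs \<Longrightarrow> distinct vs"
proof (induct vs)
  case (Cons a vs)
  hence "\<forall>x\<in>set vs. c a < c x" "distinct vs" by auto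
  thus ?case by auto
qed simp

theorem theorem4p2:
  fixes T0 :: "(real ^ 'n::finite) set set" and c :: "real ^ 'n \<Rightarrow> nat" and N :: nat
  assumes "CARD('n) \<ge> 2" and "N \<ge> CARD('n)"
    and "colored_triangulation N T0 c"
  shows "\<forall>T\<in>T0. \<forall>vs. set vs = T \<and> sorted_wrt (\<lambda>a b. c a < c b) vs \<longrightarrow>
           (\<lambda>S. set (map fst S)) ` gen_desc N (gen_init c vs)
             = (\<lambda>M. set (fst M)) ` maub_desc (maub_init N c vs)"
proof (intro ballI allI impI)
  fix T vs assume T: "T \<in> T0" and h: "set vs = T \<and> sorted_wrt (\<lambda>a b. c a < c b) vs"
  have N0: "N > 0" using assms(1,2) by simp
  have simpT: "is_simplex T" using assms(3) T unfolding colored_triangulation_def conforming_triangulation_def by blast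
  have cT: "\<forall>v\<in>T. c v \<le> N" using assms(3) T unfolding colored_triangulation_def by blast
  have d: "distinct vs" using h sorted_distinct by blast
  have "length vs = Suc CARD('n)"
    using distinct_card[OF d] h simpT unfolding is_simplex_def by simp
  hence "Rel N (gen_init c vs) (maub_init N c vs)"
    using init_Rel[OF N0] h cT by blast
  thus "(\<lambda>S. set (map fst S)) ` gen_desc N (gen_init c vs)
             = (\<lambda>M. set (fst M)) ` maub_desc (maub_init N c vs)"
    using desc_eq N0 by blast
qed


end
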